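(* Let $R$ be an NJ-symmetric exchange ring. Then (1) $R$ is clean, and (2) $R$ is quasi-duo.
   Context: Rings are associative with identity. $N(R)$ is the set of nilpotent elements, $J(R)$ the Jacobson radical. $R$ is NJ-symmetric if for all $a,b,c\in R$, $abc\in N(R)$ implies $bac\in J(R)$. $R$ is clean if every element is a sum of an idempotent and a unit. $R$ is quasi-duo if every maximal left ideal and every maximal right ideal of $R$ is a two-sided ideal. *)

theory Defs
  imports Main
begin

text \<open>Rings are elements of a type of class ring_1 (associative, with identity, not
necessarily commutative).\<close>

definition nilpotents :: "'a::ring_1 set" where
  "nilpotents = {a. \<exists>n::nat. a ^ n = 0}"

definition left_ideal :: "'a::ring_1 set \<Rightarrow> bool" where
  "left_ideal I \<longleftrightarrow> 0 \<in> I \<and> (\<forall>x\<in>I. \<forall>y\<in>I. x + y \<in> I) \<and> (\<forall>x\<in>I. - x \<in> I)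
     \<and> (\<forall>r. \<forall>x\<in>I. r * x \<in> I)"

definition right_ideal :: "'a::ring_1 set \<Rightarrow> bool" where
  "right_ideal I \<longleftrightarrow> 0 \<in> I \<and> (\<forall>x\<in>I. \<forall>y\<in>I. x + y \<in> I) \<and> (\<forall>x\<in>I. - x \<in> I)
     \<and> (\<forall>r. \<forall>x\<in>I. x * r \<in> I)"

definition two_sided_ideal :: "'a::ring_1 set \<Rightarrow> bool" where
  "two_sided_ideal I \<longleftrightarrow> left_ideal I \<and> right_ideal I"

definition maximal_left_ideal :: "'a::ring_1 set \<Rightarrow> bool" where
  "maximal_left_ideal M \<longleftrightarrow> left_ideal M \<and> M \<noteq> UNIV \<and>
     (\<forall>I. left_ideal I \<and> M \<subseteq> I \<and> I \<noteq> UNIV \<longrightarrow> I = M)"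

definition maximal_right_ideal :: "'a::ring_1 set \<Rightarrow> bool" where
  "maximal_right_ideal M \<longleftrightarrow> right_ideal M \<and> M \<noteq> UNIV \<and>
     (\<forall>I. right_ideal I \<and> M \<subseteq> I \<and> I \<noteq> UNIV \<longrightarrow> I = M)"

definition jacobson :: "'a::ring_1 set" where
  "jacobson = \<Inter> {M. maximal_left_ideal M}"

definition is_idempotent :: "'a::ring_1 \<Rightarrow> bool" where
  "is_idempotent e \<longleftrightarrow> e * e = e"

definition is_unit :: "'a::ring_1 \<Rightarrow> bool" where
  "is_unit u \<longleftrightarrow> (\<exists>v. u * v = 1 \<and> v * u = 1)"

definition NJ_symmetric :: "'a::ring_1 itself \<Rightarrow> bool" where
  "NJ_symmetric _ \<longleftrightarrow> (\<forall>a b c :: 'a. a * b * c \<in> nilpotents \<longrightarrow> b * a * c \<in> jacobson)"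

text \<open>Exchange ring (Warfield/Nicholson elementwise form): for every a there is an
idempotent e \<in> aR with 1 - e \<in> (1 - a)R.\<close>
definition exchange_ring :: "'a::ring_1 itself \<Rightarrow> bool" where
  "exchange_ring _ \<longleftrightarrow> (\<forall>a :: 'a. \<exists>e. is_idempotent e \<and> (\<exists>r. e = a * r) \<and> (\<exists>s. 1 - e = (1 - a) * s))"

definition clean_ring :: "'a::ring_1 itself \<Rightarrow> bool" where
  "clean_ring _ \<longleftrightarrow> (\<forall>a :: 'a. \<exists>e u. is_idempotent e \<and> is_unit u \<and> a = e + u)"

definition quasi_duo :: "'a::ring_1 itself \<Rightarrow> bool" where
  "quasi_duo _ \<longleftrightarrow> (\<forall>M :: 'a set. (maximal_left_ideal M \<or> maximal_right_ideal M) \<longrightarrow> two_sided_ideal M)"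

end

theory Submission
  imports Defs
begin


definition Qset :: "'a::ring_1 set" where
  "Qset = {x. \<forall>r. \<exists>c. c * (1 - r*x) = 1}"

lemma Q_left: "x \<in> Qset \<Longrightarrow> t*x \<in> (Qset::'a::ring_1 set)"
  unfolding Qset_def by (auto simp: mult.assoc[symmetric])

lemma Q_one: "(x::'a::ring_1) \<in> Qset \<Longrightarrow> \<exists>c. c*(1-x) = 1"
proof -
  assume "x \<in> Qset"
  then have "\<exists>c. c*(1 - 1*x) = 1" unfolding Qset_def by blast
  then show ?thesis by simp
qed

lemma Q_unit:
  assumes "(x::'a::ring_1) \<in> Qset" shows "\<exists>k. (1-x)*k = 1 \<and> k*(1-x) = 1"
proof -
  obtain c where c: "c*(1-x) = 1" using Q_one[OF assms] by blast
  obtain d where d: "d*(1 - (-c)*x) = 1" using assms unfolding Qset_def by blast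
  have e1: "1 - (-c)*x = c*(1-x) + c*x" unfolding c by simp
  have e2: "c*(1-x) + c*x = c" by (simp add: algebra_simps)
  have dc: "d*c = 1" using d unfolding e1 e2 .
  have "d = d*(c*(1-x))" unfolding c by simp
  also have "\<dots> = (d*c)*(1-x)" by (simp add: mult.assoc)
  also have "\<dots> = 1-x" unfolding dc by simp
  finally have "d = 1 - x" .
  then show ?thesis using c dc by blast
qed

lemma Q_right:
  assumes "(x::'a::ring_1) \<in> Qset" shows "x*s \<in> Qset"
  unfolding Qset_def
proof (intro CollectI allI)
  fix r
  obtain d where d: "d*(1 - (s*r)*x) = 1" using assms unfolding Qset_def by blast
  have e0: "r*x*d*s - r*x*d*s*r*x*s = r*x*(d*(1 - (s*r)*x))*s" by (simp add: algebra_simps)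
  have e: "r*x*d*s - r*x*d*s*r*x*s = r*x*s" unfolding e0 d by simp
  have "(1 + r*x*d*s)*(1 - r*(x*s)) = 1 - r*x*s + (r*x*d*s - r*x*d*s*r*x*s)"
    by (simp add: algebra_simps)
  also have "\<dots> = 1" using e by simp
  finally show "\<exists>c. c*(1 - r*(x*s)) = 1" by blast
qed

lemma Q_add:
  assumes "(x::'a::ring_1) \<in> Qset" "y \<in> Qset" shows "x + y \<in> Qset"
  unfolding Qset_def
proof (intro CollectI allI)
  fix r
  obtain c where c: "c*(1 - r*x) = 1" using assms unfolding Qset_def by blast
  obtain d where d: "d*(1 - (c*r)*y) = 1" using assms unfolding Qset_def by blast
  have "d*c*(1 - r*(x+y)) = d*(c*(1-r*x) - c*r*y)" by (simp add: algebra_simps)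
  also have "\<dots> = d*(1 - (c*r)*y)" unfolding c by (simp add: mult.assoc)
  also have "\<dots> = 1" by (rule d)
  finally show "\<exists>c. c*(1 - r*(x+y)) = 1" by blast
qed

lemma Q_neg: "(x::'a::ring_1) \<in> Qset \<Longrightarrow> - x \<in> Qset"
  unfolding Qset_def
proof (intro CollectI allI)
  fix r assume "x \<in> {x. \<forall>r. \<exists>c. c * (1 - r * x) = 1}"
  then have "\<exists>c. c * (1 - (-r) * x) = 1" by blast
  then show "\<exists>c. c * (1 - r * - x) = 1" by simp
qed

lemma Q_diff: "(x::'a::ring_1) \<in> Qset \<Longrightarrow> y \<in> Qset \<Longrightarrow> x - y \<in> Qset"
  using Q_add[of x "-y"] Q_neg[of y] by simp

lemma Q_zero: "0 \<in> Qset"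
  unfolding Qset_def by auto

lemma Q_idem: "(g::'a::ring_1) \<in> Qset \<Longrightarrow> g*g = g \<Longrightarrow> g = 0"
proof -
  assume g: "g \<in> Qset" "g*g = g"
  obtain c where c: "c*(1-g) = 1" using Q_one[OF g(1)] by blast
  have "g = c*(1-g)*g" using c by simp
  also have "\<dots> = c*(g - g*g)" by (simp add: algebra_simps)
  finally show "g = 0" using g by simp
qed



lemma li_props:
  assumes "left_ideal (M::'a::ring_1 set)"
  shows "0 \<in> M" "x \<in> M \<Longrightarrow> y \<in> M \<Longrightarrow> x + y \<in> M" "x \<in> M \<Longrightarrow> - x \<in> M"
    "x \<in> M \<Longrightarrow> r * x \<in> M"
  using assms unfolding left_ideal_def by auto

lemma li_diff: "left_ideal (M::'a::ring_1 set) \<Longrightarrow> x \<in> M \<Longrightarrow> y \<in> M \<Longrightarrow> x - y \<in> M"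
  using li_props(2)[of M x "-y"] li_props(3)[of M y] by simp

lemma ri_props:
  assumes "right_ideal (M::'a::ring_1 set)"
  shows "0 \<in> M" "x \<in> M \<Longrightarrow> y \<in> M \<Longrightarrow> x + y \<in> M" "x \<in> M \<Longrightarrow> - x \<in> M"
    "x \<in> M \<Longrightarrow> x * r \<in> M"
  using assms unfolding right_ideal_def by auto

lemma ri_diff: "right_ideal (M::'a::ring_1 set) \<Longrightarrow> x \<in> M \<Longrightarrow> y \<in> M \<Longrightarrow> x - y \<in> M"
  using ri_props(2)[of M x "-y"] ri_props(3)[of M y] by simp

lemma li_one: assumes "left_ideal (M::'a::ring_1 set)" "1 \<in> M" shows "M = UNIV"
proof -
  have "r \<in> M" for r :: 'a
  proof -
    have "r*1 \<in> M" by (rule li_props(4)[OF assms])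
    then show ?thesis by simp
  qed
  then show ?thesis by blast
qed

lemma ri_one: assumes "right_ideal (M::'a::ring_1 set)" "1 \<in> M" shows "M = UNIV"
proof -
  have "r \<in> M" for r :: 'a
  proof -
    have "1*r \<in> M" by (rule ri_props(4)[OF assms])
    then show ?thesis by simp
  qed
  then show ?thesis by blast
qed

lemma max_left_gen:
  assumes "maximal_left_ideal (M::'a::ring_1 set)" "x \<notin> M"
  shows "\<exists>m\<in>M. \<exists>t. 1 = m + t*x"
proof -
  define M' where "M' = {m + t*x | m t. m \<in> M}"
  have L: "left_ideal M" and mx: "\<forall>I. left_ideal I \<and> M \<subseteq> I \<and> I \<noteq> UNIV \<longrightarrow> I = M"
    using assms(1) unfolding maximal_left_ideal_def by auto
  have "left_ideal M'" unfolding left_ideal_def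
  proof (intro conjI ballI allI)
    have "(0::'a) = 0 + 0*x" by simp
    then show "0 \<in> M'" unfolding M'_def using li_props(1)[OF L] by blast
  next
    fix a b assume "a \<in> M'" "b \<in> M'"
    then obtain m1 t1 m2 t2 where "a = m1 + t1*x" "b = m2 + t2*x" "m1 \<in> M" "m2 \<in> M"
      unfolding M'_def by blast
    then have "a + b = (m1 + m2) + (t1+t2)*x" "m1 + m2 \<in> M" using li_props(2)[OF L]
      by (auto simp: algebra_simps)
    then show "a + b \<in> M'" unfolding M'_def by blast
  next
    fix a assume "a \<in> M'"
    then obtain m1 t1 where "a = m1 + t1*x" "m1 \<in> M"
      unfolding M'_def by blast
    then have "- a = (- m1) + (-t1)*x" "- m1 \<in> M" using li_props(3)[OF L]
      by (auto simp: algebra_simps)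
    then show "- a \<in> M'" unfolding M'_def by blast
  next
    fix r a assume "a \<in> M'"
    then obtain m1 t1 where "a = m1 + t1*x" "m1 \<in> M"
      unfolding M'_def by blast
    then have "r * a = (r * m1) + (r*t1)*x" "r * m1 \<in> M" using li_props(4)[OF L]
      by (auto simp: algebra_simps)
    then show "r * a \<in> M'" unfolding M'_def by blast
  qed
  moreover have "M \<subseteq> M'"
  proof
    fix m assume mM: "m \<in> M"
    have "m = m + 0*x" by simp
    then show "m \<in> M'" unfolding M'_def using mM by blast
  qed
  moreover have "x \<in> M'"
  proof -
    have "x = 0 + 1*x" by simp
    then show ?thesis unfolding M'_def using li_props(1)[OF L] by blast
  qed
  ultimately have "M' = UNIV" using mx assms(2) by blast
  then have "1 \<in> M'" by simp
  then show ?thesis unfolding M'_def by blast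
qed

lemma max_right_gen:
  assumes "maximal_right_ideal (M::'a::ring_1 set)" "x \<notin> M"
  shows "\<exists>m\<in>M. \<exists>t. 1 = m + x*t"
proof -
  define M' where "M' = {m + x*t | m t. m \<in> M}"
  have L: "right_ideal M" and mx: "\<forall>I. right_ideal I \<and> M \<subseteq> I \<and> I \<noteq> UNIV \<longrightarrow> I = M"
    using assms(1) unfolding maximal_right_ideal_def by auto
  have "right_ideal M'" unfolding right_ideal_def
  proof (intro conjI ballI allI)
    have "(0::'a) = 0 + x*0" by simp
    then show "0 \<in> M'" unfolding M'_def using ri_props(1)[OF L] by blast
  next
    fix a b assume "a \<in> M'" "b \<in> M'"
    then obtain m1 t1 m2 t2 where "a = m1 + x*t1" "b = m2 + x*t2" "m1 \<in> M" "m2 \<in> M"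
      unfolding M'_def by blast
    then have "a + b = (m1 + m2) + x*(t1+t2)" "m1 + m2 \<in> M" using ri_props(2)[OF L]
      by (auto simp: algebra_simps)
    then show "a + b \<in> M'" unfolding M'_def by blast
  next
    fix a assume "a \<in> M'"
    then obtain m1 t1 where "a = m1 + x*t1" "m1 \<in> M"
      unfolding M'_def by blast
    then have "- a = (- m1) + x*(-t1)" "- m1 \<in> M" using ri_props(3)[OF L]
      by (auto simp: algebra_simps)
    then show "- a \<in> M'" unfolding M'_def by blast
  next
    fix r a assume "a \<in> M'"
    then obtain m1 t1 where "a = m1 + x*t1" "m1 \<in> M"
      unfolding M'_def by blast
    then have "a * r = (m1 * r) + x*(t1*r)" "m1 * r \<in> M" using ri_props(4)[OF L]
      by (auto simp: algebra_simps)
    then show "a * r \<in> M'" unfolding M'_def by blast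
  qed
  moreover have "M \<subseteq> M'"
  proof
    fix m assume mM: "m \<in> M"
    have "m = m + x*0" by simp
    then show "m \<in> M'" unfolding M'_def using mM by blast
  qed
  moreover have "x \<in> M'"
  proof -
    have "x = 0 + x*1" by simp
    then show ?thesis unfolding M'_def using ri_props(1)[OF L] by blast
  qed
  ultimately have "M' = UNIV" using mx assms(2) by blast
  then have "1 \<in> M'" by simp
  then show ?thesis unfolding M'_def by blast
qed

lemma Q_sub_maxleft:
  assumes "maximal_left_ideal (M::'a::ring_1 set)" shows "Qset \<subseteq> M"
proof
  fix x :: 'a assume x: "x \<in> Qset"
  have L: "left_ideal M" and ne: "M \<noteq> UNIV" using assms unfolding maximal_left_ideal_def by auto
  show "x \<in> M"
  proof (rule ccontr)
    assume "x \<notin> M"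
    then obtain m t where m: "m \<in> M" "1 = m + t*x" using max_left_gen[OF assms] by blast
    have "t*x \<in> Qset" using Q_left[OF x] .
    then obtain k where "k*(1 - t*x) = 1" using Q_unit by blast
    moreover have "1 - t*x = m" using m(2) by (simp add: algebra_simps)
    moreover have "k*m \<in> M" by (rule li_props(4)[OF L m(1)])
    ultimately have "1 \<in> M" by simp
    then show False using li_one[OF L] ne by blast
  qed
qed

lemma Q_sub_maxright:
  assumes "maximal_right_ideal (M::'a::ring_1 set)" shows "Qset \<subseteq> M"
proof
  fix x :: 'a assume x: "x \<in> Qset"
  have L: "right_ideal M" and ne: "M \<noteq> UNIV" using assms unfolding maximal_right_ideal_def by auto
  show "x \<in> M"
  proof (rule ccontr)
    assume "x \<notin> M"
    then obtain m t where m: "m \<in> M" "1 = m + x*t" using max_right_gen[OF assms] by blast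
    have "x*t \<in> Qset" using Q_right[OF x] .
    then obtain k where "(1 - x*t)*k = 1" using Q_unit by blast
    moreover have "1 - x*t = m" using m(2) by (simp add: algebra_simps)
    moreover have "m*k \<in> M" by (rule ri_props(4)[OF L m(1)])
    ultimately have "1 \<in> M" by simp
    then show False using ri_one[OF L] ne by blast
  qed
qed

lemma jac_sub_Q: "(jacobson::'a::ring_1 set) \<subseteq> Qset"
proof
  fix x :: 'a assume x: "x \<in> jacobson"
  show "x \<in> Qset" unfolding Qset_def
  proof (intro CollectI allI, rule ccontr)
    fix r assume nc: "\<not> (\<exists>c. c*(1 - r*x) = 1)"
    define A where "A = {I. left_ideal I \<and> (1 - r*x) \<in> I \<and> (1::'a) \<notin> I}"
    define L where "L = range (\<lambda>t. t*(1 - r*x))"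
    have "left_ideal L" unfolding left_ideal_def L_def
    proof (intro conjI ballI allI)
      show "0 \<in> range (\<lambda>t. t * (1 - r * x))" proof -
        have "(0::'a) = 0 * (1 - r * x)" by simp
        then show ?thesis by blast
      qed
    next
      fix a b assume "a \<in> range (\<lambda>t. t * (1 - r * x))" "b \<in> range (\<lambda>t. t * (1 - r * x))"
      then obtain t1 t2 where "a = t1 * (1 - r * x)" "b = t2 * (1 - r * x)" by blast
      then have "a + b = (t1 + t2) * (1 - r * x)" by (simp add: distrib_right)
      then show "a + b \<in> range (\<lambda>t. t * (1 - r * x))" by blast
    next
      fix a assume "a \<in> range (\<lambda>t. t * (1 - r * x))"
      then obtain t1 where "a = t1 * (1 - r * x)" by blast
      then have "- a = (- t1) * (1 - r * x)" by simp
      then show "- a \<in> range (\<lambda>t. t * (1 - r * x))" by blast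
    next
      fix s a assume "a \<in> range (\<lambda>t. t * (1 - r * x))"
      then obtain t1 where "a = t1 * (1 - r * x)" by blast
      then have "s * a = (s * t1) * (1 - r * x)" by (simp add: mult.assoc)
      then show "s * a \<in> range (\<lambda>t. t * (1 - r * x))" by blast
    qed
    moreover have "1 - r*x \<in> L"
    proof -
      have "1 - r*x = 1 * (1 - r*x)" by simp
      then show ?thesis unfolding L_def by blast
    qed
    moreover have "1 \<notin> L" unfolding L_def using nc by auto
    ultimately have LA: "L \<in> A" unfolding A_def by blast
    have "\<exists>M\<in>A. \<forall>X\<in>A. M \<subseteq> X \<longrightarrow> X = M"
    proof (rule subset_Zorn_nonempty)
      show "A \<noteq> {}" using LA by blast
    next
      fix C assume Cne: "C \<noteq> {}" and ch: "subset.chain A C"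
      have CA: "C \<subseteq> A" and cmp: "\<forall>X\<in>C. \<forall>Y\<in>C. X \<subseteq> Y \<or> Y \<subseteq> X"
        using ch unfolding pred_on.chain_def by auto
      have li: "\<And>I. I \<in> C \<Longrightarrow> left_ideal I" using CA unfolding A_def by blast
      have "left_ideal (\<Union>C)" unfolding left_ideal_def
      proof (intro conjI ballI allI)
        obtain I where "I \<in> C" using Cne by blast
        then show "0 \<in> \<Union>C" using li_props(1)[OF li] by blast
      next
        fix a b assume "a \<in> \<Union>C" "b \<in> \<Union>C"
        then obtain I1 I2 where I: "I1 \<in> C" "I2 \<in> C" "a \<in> I1" "b \<in> I2" by blast
        then show "a + b \<in> \<Union>C" using cmp li_props(2)[OF li] by (metis UnionI subsetD)
      next
        fix a assume "a \<in> \<Union>C"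
        then show "- a \<in> \<Union>C" using li_props(3)[OF li] by blast
      next
        fix s a assume "a \<in> \<Union>C"
        then show "s * a \<in> \<Union>C" using li_props(4)[OF li] by blast
      qed
      moreover have "1 - r*x \<in> \<Union>C" using Cne CA unfolding A_def by blast
      moreover have "1 \<notin> \<Union>C" using CA unfolding A_def by blast
      ultimately show "\<Union>C \<in> A" unfolding A_def by blast
    qed
    then obtain M where MA: "M \<in> A" and Mmax: "\<forall>X\<in>A. M \<subseteq> X \<longrightarrow> X = M" by blast
    have LM: "left_ideal M" and rxM: "1 - r*x \<in> M" and oM: "1 \<notin> M" using MA unfolding A_def by auto
    have "maximal_left_ideal M" unfolding maximal_left_ideal_def
    proof (intro conjI allI impI)
      show "left_ideal M" by (rule LM)
      show "M \<noteq> UNIV" using oM by blast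
    next
      fix I assume I: "left_ideal I \<and> M \<subseteq> I \<and> I \<noteq> UNIV"
      then have "1 \<notin> I" using li_one by blast
      then have "I \<in> A" using I rxM unfolding A_def by blast
      then show "I = M" using Mmax I by blast
    qed
    then have "x \<in> M" using x unfolding jacobson_def by blast
    then have "r*x \<in> M" using li_props(4)[OF LM] by blast
    then have "(1 - r*x) + r*x \<in> M" using li_props(2)[OF LM] rxM by blast
    then show False using oM by simp
  qed
qed

lemma nil_Q:
  assumes NJ: "NJ_symmetric TYPE('a::ring_1)" and n: "(n::'a) \<in> nilpotents"
  shows "n \<in> Qset"
proof -
  have "n*1*1 \<in> nilpotents" using n by simp
  then have "1*n*1 \<in> jacobson" using NJ unfolding NJ_symmetric_def by blast
  then show ?thesis using jac_sub_Q by auto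
qed

lemma central:
  assumes NJ: "NJ_symmetric TYPE('a::ring_1)" and ee: "(e::'a)*e = e"
  shows "e*x - x*e \<in> Qset"
proof -
  have z: "(1-e)*e = 0" "e*(1-e) = 0" using ee by (simp_all add: algebra_simps)
  have "(e*x*(1-e))^2 = e*x*((1-e)*e)*x*(1-e)" by (simp add: power2_eq_square mult.assoc)
  then have "(e*x*(1-e))^2 = 0" using z by simp
  then have "e*x*(1-e) \<in> nilpotents" unfolding nilpotents_def by blast
  then have q1: "e*x*(1-e) \<in> Qset" using nil_Q[OF NJ] by blast
  have "((1-e)*x*e)^2 = (1-e)*x*(e*(1-e))*x*e" by (simp add: power2_eq_square mult.assoc)
  then have "((1-e)*x*e)^2 = 0" using z by simp
  then have "(1-e)*x*e \<in> nilpotents" unfolding nilpotents_def by blast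
  then have q2: "(1-e)*x*e \<in> Qset" using nil_Q[OF NJ] by blast
  have "e*x - x*e = e*x*(1-e) - (1-e)*x*e" by (simp add: algebra_simps)
  then show ?thesis using Q_diff[OF q1 q2] by simp
qed



lemma DF:
  assumes NJ: "NJ_symmetric TYPE('a::ring_1)" and uv: "(u::'a)*v - 1 \<in> Qset"
  shows "is_unit u"
proof -
  have "-(u*v - 1) \<in> Qset" using Q_neg[OF uv] .
  then have j: "1 - u*v \<in> Qset" by simp
  obtain k where k: "(1 - (1 - u*v))*k = 1" using Q_unit[OF j] by blast
  define w where "w = v*k"
  have uw: "u*w = 1" using k unfolding w_def by (simp add: mult.assoc)
  define g where "g = 1 - w*u"
  have "w*u*(w*u) = w*(u*w)*u" by (simp add: mult.assoc)
  then have wuwu: "w*u*(w*u) = w*u" using uw by simp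
  have "g*g = 1 - w*u - w*u + w*u*(w*u)" unfolding g_def by (simp add: algebra_simps)
  then have gg: "g*g = g" unfolding wuwu g_def by simp
  have "u*g = u - (u*w)*u" unfolding g_def by (simp add: algebra_simps)
  then have ug: "u*g = 0" using uw by simp
  have "g*u - u*g \<in> Qset" by (rule central[OF NJ gg])
  then have "g*u \<in> Qset" using ug by simp
  then have "g*u*w \<in> Qset" by (rule Q_right)
  then have "g \<in> Qset" using uw by (simp add: mult.assoc)
  then have "g = 0" using Q_idem gg by blast
  then have "w*u = 1" unfolding g_def by simp
  then show ?thesis unfolding is_unit_def using uw by blast
qed

lemma exch_unit:
  assumes NJ: "NJ_symmetric TYPE('a::ring_1)" and EX: "exchange_ring TYPE('a)"
  shows "\<exists>e. e*e = e \<and> is_unit ((y::'a) - 1 + e)"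
proof -
  obtain e r t where ee: "e*e = e" and er: "e = y*r" and et: "1 - e = (1-y)*t"
    using EX unfolding exchange_ring_def is_idempotent_def by blast
  define u where "u = y - 1 + e"
  define v where "v = e*r - (1-e)*t"
  have ee2: "(1-e)*(1-e) = 1-e" using ee by (simp add: algebra_simps)
  have z: "(1-e)*e = 0" "e*(1-e) = 0" using ee by (simp_all add: algebra_simps)
  define q1 where "q1 = e*(e*y - y*e)*r"
  define q2 where "q2 = e*((1-e)*y - y*(1-e))*t"
  define q3 where "q3 = (1-e)*(e*(1-y) - (1-y)*e)*r"
  define q4 where "q4 = (1-e)*((1-e)*(1-y) - (1-y)*(1-e))*t"
  have Q1: "q1 \<in> Qset" unfolding q1_def by (rule Q_right[OF Q_left[OF central[OF NJ ee]]])
  have Q2: "q2 \<in> Qset" unfolding q2_def by (rule Q_right[OF Q_left[OF central[OF NJ ee2]]])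
  have Q3: "q3 \<in> Qset" unfolding q3_def by (rule Q_right[OF Q_left[OF central[OF NJ ee]]])
  have Q4: "q4 \<in> Qset" unfolding q4_def by (rule Q_right[OF Q_left[OF central[OF NJ ee2]]])
  have uv: "u*v = e*y*e*r - e*y*(1-e)*t - (1-e)*(1-y)*e*r + (1-e)*(1-y)*(1-e)*t"
    unfolding u_def v_def by (simp add: algebra_simps)
  have h1: "e*y*e*r = e*e*(y*r) - q1" unfolding q1_def by (simp add: algebra_simps)
  have h2: "e*y*(1-e)*t = e*(1-e)*y*t - q2" unfolding q2_def by (simp add: algebra_simps)
  have h3: "(1-e)*(1-y)*e*r = (1-e)*e*(1-y)*r - q3" unfolding q3_def by (simp add: algebra_simps)
  have h4: "(1-e)*(1-y)*(1-e)*t = (1-e)*(1-e)*((1-y)*t) - q4" unfolding q4_def by (simp add: algebra_simps)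
  have k1: "e*e*(y*r) = e" by (simp only: er[symmetric] ee)
  have k2: "e*(1-e)*y*t = 0" by (simp add: z)
  have k3: "(1-e)*e*(1-y)*r = 0" by (simp add: z)
  have k4: "(1-e)*(1-e)*((1-y)*t) = 1-e" by (simp only: et[symmetric] ee2)
  have "u*v = (e - q1) - (0 - q2) - (0 - q3) + ((1-e) - q4)"
    by (simp only: uv h1 h2 h3 h4 k1 k2 k3 k4)
  then have "u*v - 1 = q2 + q3 - q1 - q4" by (simp add: algebra_simps)
  moreover have "q2 + q3 - q1 - q4 \<in> Qset" by (rule Q_diff[OF Q_diff[OF Q_add[OF Q2 Q3] Q1] Q4])
  ultimately have "u*v - 1 \<in> Qset" by simp
  then have "is_unit u" by (rule DF[OF NJ])
  then show ?thesis using ee unfolding u_def by blast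
qed

lemma left_exch:
  assumes NJ: "NJ_symmetric TYPE('a::ring_1)" and EX: "exchange_ring TYPE('a)"
  shows "\<exists>e z1 z2. e*e = e \<and> e - z1*(y::'a) \<in> Qset \<and> (1-e) - z2*(1-y) \<in> Qset"
proof -
  obtain e where ee: "e*e = e" and un: "is_unit (y - 1 + e)" using exch_unit[OF NJ EX] by blast
  define u where "u = y - 1 + e"
  obtain ui where ui: "ui*u = 1" using un unfolding is_unit_def u_def by blast
  have ee2: "(1-e)*(1-e) = 1-e" using ee by (simp add: algebra_simps)
  have eu: "e*u = e*y" unfolding u_def using ee by (simp add: algebra_simps)
  have gu: "(1-e)*u = - ((1-e)*(1-y))" unfolding u_def using ee by (simp add: algebra_simps)
  have A: "ui*(e*u - u*e) \<in> Qset" by (rule Q_left[OF central[OF NJ ee]])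
  have "ui*(e*u - u*e) = ui*(e*u) - (ui*u)*e"
    by (simp add: right_diff_distrib mult.assoc)
  also have "\<dots> = (ui*e)*y - e" unfolding eu ui by (simp add: mult.assoc)
  finally have "e - (ui*e)*y = - (ui*(e*u - u*e))" by simp
  then have 1: "e - (ui*e)*y \<in> Qset" using Q_neg[OF A] by simp
  have B: "ui*((1-e)*u - u*(1-e)) \<in> Qset" by (rule Q_left[OF central[OF NJ ee2]])
  have "ui*((1-e)*u - u*(1-e)) = ui*((1-e)*u) - (ui*u)*(1-e)"
    by (simp add: right_diff_distrib mult.assoc)
  also have "\<dots> = - (ui*(1-e))*(1-y) - (1-e)" unfolding gu ui by (simp add: mult.assoc)
  finally have "(1-e) - (- (ui*(1-e)))*(1-y) = - (ui*((1-e)*u - u*(1-e)))" by simp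
  then have 2: "(1-e) - (- (ui*(1-e)))*(1-y) \<in> Qset" using Q_neg[OF B] by simp
  show ?thesis using ee 1 2 by blast
qed

lemma clean:
  assumes NJ: "NJ_symmetric TYPE('a::ring_1)" and EX: "exchange_ring TYPE('a)"
  shows "clean_ring TYPE('a)"
  unfolding clean_ring_def
proof
  fix a :: 'a
  obtain e where ee: "e*e = e" and un: "is_unit (a - 1 + e)" using exch_unit[OF NJ EX] by blast
  have "is_idempotent (1-e)" unfolding is_idempotent_def using ee by (simp add: algebra_simps)
  moreover have "a = (1-e) + (a - 1 + e)" by simp
  ultimately show "\<exists>e u. is_idempotent e \<and> is_unit u \<and> a = e + u" using un by blast
qed

lemma qd_left:
  assumes NJ: "NJ_symmetric TYPE('a::ring_1)" and EX: "exchange_ring TYPE('a)"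
    and M: "maximal_left_ideal (M::'a set)"
  shows "two_sided_ideal M"
proof -
  have L: "left_ideal M" and ne: "M \<noteq> UNIV" using M unfolding maximal_left_ideal_def by auto
  have QM: "Qset \<subseteq> M" by (rule Q_sub_maxleft[OF M])
  have "\<forall>s. \<forall>c\<in>M. c*s \<in> M"
  proof (intro allI ballI, rule ccontr)
    fix s c assume cM: "c \<in> M" and nM: "c*s \<notin> M"
    obtain m t where m: "m \<in> M" "1 = m + t*(c*s)" using max_left_gen[OF M nM] by blast
    define c' where "c' = t*c"
    have c'M: "c' \<in> M" unfolding c'_def using li_props(4)[OF L cM] .
    have "1 - c'*s = m" using m(2) unfolding c'_def by (simp add: algebra_simps mult.assoc)
    then have oc: "1 - c'*s \<in> M" using m(1) by simp
    obtain e z1 z2 where ee: "e*e = e" and q1: "e - z1*(s*c') \<in> Qset"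
        and q2: "(1-e) - z2*(1-s*c') \<in> Qset"
      using left_exch[OF NJ EX] by blast
    have "e = (e - z1*(s*c')) + (z1*s)*c'" by (simp add: mult.assoc)
    moreover have "e - z1*(s*c') \<in> M" using q1 QM by blast
    then have "(e - z1*(s*c')) + (z1*s)*c' \<in> M"
      by (rule li_props(2)[OF L _ li_props(4)[OF L c'M, where r="z1*s"]])
    ultimately have eM: "e \<in> M" by simp
    have D1: "c'*((1-e) - z2*(1 - s*c'))*s \<in> Qset" by (rule Q_right[OF Q_left[OF q2]])
    have D2: "c'*(e*s - s*e) \<in> Qset" by (rule Q_left[OF central[OF NJ ee]])
    have id: "1 = (1 + c'*z2*s)*(1 - c'*s) + c'*((1-e) - z2*(1 - s*c'))*s + c'*(e*s - s*e) + (c'*s)*e"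
      by (simp add: algebra_simps)
    have P: "(1 + c'*z2*s)*(1 - c'*s) \<in> M" using li_props(4)[OF L oc] .
    have E: "(c'*s)*e \<in> M" using li_props(4)[OF L eM] .
    have D1M: "c'*((1-e) - z2*(1 - s*c'))*s \<in> M" using D1 QM by blast
    have D2M: "c'*(e*s - s*e) \<in> M" using D2 QM by blast
    have "(1 + c'*z2*s)*(1 - c'*s) + c'*((1-e) - z2*(1 - s*c'))*s + c'*(e*s - s*e) + (c'*s)*e \<in> M"
      by (rule li_props(2)[OF L li_props(2)[OF L li_props(2)[OF L P D1M] D2M] E])
    then have "1 \<in> M" using id by simp
    then show False using li_one[OF L] ne by blast
  qed
  then have "right_ideal M" using L unfolding right_ideal_def left_ideal_def by blast
  then show ?thesis using L unfolding two_sided_ideal_def by blast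
qed

lemma qd_right:
  assumes NJ: "NJ_symmetric TYPE('a::ring_1)" and EX: "exchange_ring TYPE('a)"
    and M: "maximal_right_ideal (M::'a set)"
  shows "two_sided_ideal M"
proof -
  have L: "right_ideal M" and ne: "M \<noteq> UNIV" using M unfolding maximal_right_ideal_def by auto
  have QM: "Qset \<subseteq> M" by (rule Q_sub_maxright[OF M])
  have "\<forall>s. \<forall>c\<in>M. s*c \<in> M"
  proof (intro allI ballI, rule ccontr)
    fix s c assume cM: "c \<in> M" and nM: "s*c \<notin> M"
    obtain m t where m: "m \<in> M" "1 = m + (s*c)*t" using max_right_gen[OF M nM] by blast
    define c' where "c' = c*t"
    have c'M: "c' \<in> M" unfolding c'_def using ri_props(4)[OF L cM] .
    have "1 - s*c' = m" using m(2) unfolding c'_def by (simp add: algebra_simps mult.assoc)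
    then have oc: "1 - s*c' \<in> M" using m(1) by simp
    obtain e r t2 where ee: "e*e = e" and er: "e = (c'*s)*r" and et: "1 - e = (1 - c'*s)*t2"
      using EX unfolding exchange_ring_def is_idempotent_def by blast
    have eM: "e \<in> M" using er ri_props(4)[OF L c'M, of "s*r"] by (simp add: mult.assoc)
    have D2: "(e*s - s*e)*c' \<in> Qset" by (rule Q_right[OF central[OF NJ ee]])
    have id: "1 = (1 - s*c')*(1 + s*t2*c') - s*((1 - c'*s)*t2 - (1-e))*c' - (e*s - s*e)*c' + e*(s*c')"
      by (simp add: algebra_simps)
    have "(1 - c'*s)*t2 - (1-e) = 0" using et by simp
    then have id2: "1 = (1 - s*c')*(1 + s*t2*c') - (e*s - s*e)*c' + e*(s*c')"
      using id by simp
    have P: "(1 - s*c')*(1 + s*t2*c') \<in> M" using ri_props(4)[OF L oc] .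
    have E: "e*(s*c') \<in> M" using ri_props(4)[OF L eM] .
    have D2M: "(e*s - s*e)*c' \<in> M" using D2 QM by blast
    have "(1 - s*c')*(1 + s*t2*c') - (e*s - s*e)*c' + e*(s*c') \<in> M"
      by (rule ri_props(2)[OF L ri_diff[OF L P D2M] E])
    then have "1 \<in> M" using id2 by simp
    then show False using ri_one[OF L] ne by blast
  qed
  then have "left_ideal M" using L unfolding right_ideal_def left_ideal_def by blast
  then show ?thesis using L unfolding two_sided_ideal_def by blast
qed

theorem proposition2p9:
  assumes "NJ_symmetric TYPE('a::ring_1)"
    and "exchange_ring TYPE('a)"
  shows "clean_ring TYPE('a) \<and> quasi_duo TYPE('a)"
  using clean[OF assms] qd_left[OF assms] qd_right[OF assms] unfolding quasi_duo_def by blast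

end
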